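(* For every positive integer $n$, let $c_n$ be the smallest positive integer such that $c_n P' \in E_n$ for every $P \in E_n$. Then $$c_n = \mathrm{lcm}(1,2,\dots,n).$$
   Context: For $n \in \mathbb{N}$, $E_n$ denotes the set of polynomials $P \in \mathbb{C}[X]$ of degree $\leq n$ (including the zero polynomial) such that $P(\mathbb{Z}) \subset \mathbb{Z}$ (integer-valued polynomials of degree at most $n$). $P'$ denotes the derivative of $P$. *)

theory Defs
  imports Complex_Main "HOL-Computational_Algebra.Polynomial"
begin

definition E :: "nat \<Rightarrow> complex poly set" where
  "E n = {P. degree P \<le> n \<and> (\<forall>k::int. poly P (of_int k) \<in> \<int>)}"

end

theory Submission imports Defs begin

definition th :: "complex poly \<Rightarrow> complex poly" where "th p = pCons 0 (pderiv p)"

lemma coeff_th_pow: "coeff ((th ^^ r) p) i = of_nat i ^ r * coeff p i"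
proof (induction r arbitrary: i)
  case 0 then show ?case by simp
next
  case (Suc r)
  show ?case
  proof (cases i)
    case 0 then show ?thesis by (simp add: th_def)
  next
    case (Suc j) then show ?thesis using Suc.IH by (simp add: th_def coeff_pderiv)
  qed
qed

lemma th_dvd: "r \<le> n \<Longrightarrow> [:1,-1:]^(n-r) dvd (th ^^ r) ([:1,-1:]^n)"
proof (induction r)
  case 0 then show ?case by simp
next
  case (Suc r)
  then obtain g where g: "(th ^^ r) ([:1,-1:]^n) = [:1,-1:]^(n-r) * g"
    by (auto elim: dvdE)
  obtain m where m: "n - r = Suc m" using Suc.prems by (metis Suc_diff_Suc Suc_le_eq)
  have "n - Suc r = m" using m by simp
  have pd: "pderiv (a^Suc m * g) = a^m * (smult (of_nat (Suc m)) (pderiv a) * g + a * pderiv g)"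
    for a g :: "complex poly"
    by (simp only: pderiv_mult pderiv_power_Suc) (simp add: algebra_simps)
  have pc: "pCons 0 (p*q) = p * pCons 0 q" for p q :: "complex poly" by simp
  have "(th ^^ Suc r) ([:1,-1:]^n) = pCons 0 (pderiv ([:1,-1:]^Suc m * g))"
    using g m by (simp add: th_def)
  also have "\<dots> = [:1,-1:]^m * pCons 0 (smult (of_nat (Suc m)) (pderiv [:1,-1:]) * g + [:1,-1:] * pderiv g)"
    by (simp only: pd pc)
  finally show ?case using \<open>n - Suc r = m\<close> by (metis dvd_triv_left)
qed

lemma poly_sum_le: "degree (p::complex poly) \<le> N \<Longrightarrow> poly p x = (\<Sum>i\<le>N. coeff p i * x^i)"
proof -
  assume "degree p \<le> N"
  then show ?thesis unfolding poly_altdef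
    using sum.mono_neutral_left[of "{..N}" "{..degree p}" "\<lambda>i. coeff p i * x^i"]
    by (auto simp: coeff_eq_0 poly_altdef)
qed

lemma alt_sum: "r < n \<Longrightarrow> (\<Sum>i\<le>n. (-1)^i * of_nat (n choose i) * of_nat i ^ r) = (0::complex)"
proof -
  assume rn: "r < n"
  let ?q = "[:1,-1:]^n :: complex poly"
  have dq: "degree ?q \<le> n" using degree_power_le[of "[:1,-1:]" n] by simp
  have deg: "degree ((th ^^ r) ?q) \<le> n"
  proof (rule degree_le)
    show "\<forall>i>n. coeff ((th ^^ r) ?q) i = 0" using dq by (simp add: coeff_th_pow coeff_eq_0)
  qed
  obtain g where g: "(th ^^ r) ?q = [:1,-1:]^(n-r) * g" using th_dvd[of r n] rn by (auto elim: dvdE)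
  have "poly ((th ^^ r) ?q) 1 = 0" using g rn by simp
  moreover have "poly ((th ^^ r) ?q) 1 = (\<Sum>i\<le>n. (-1)^i * of_nat (n choose i) * of_nat i ^ r)"
    using poly_sum_le[OF deg, of 1]
    by (simp add: coeff_th_pow coeff_linear_poly_power mult_ac)
  ultimately show ?thesis by simp
qed

lemma K_sum:
  assumes "i \<le> n"
  shows "(\<Sum>j=1..n. (-1)^(j-1) * of_nat (n choose j) / of_nat j * (of_nat j ^ i - 0^i))
          = (if i = 1 then 1 else (0::complex))"
proof (cases i)
  case 0 then show ?thesis by simp
next
  case (Suc r)
  have rn: "r < n" using assms Suc by simp
  have "(\<Sum>j=1..n. (-1)^(j-1) * of_nat (n choose j) / of_nat j * (of_nat j ^ i - 0^i))
      = (\<Sum>j=1..n. - ((-1)^j * of_nat (n choose j) * of_nat j ^ r :: complex))"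
  proof (rule sum.cong)
    fix j assume "j \<in> {1..n}"
    then obtain k where k: "j = Suc k" by (cases j) auto
    show "(-1)^(j-1) * of_nat (n choose j) / of_nat j * (of_nat j ^ i - 0^i)
          = - ((-1)^j * of_nat (n choose j) * of_nat j ^ r :: complex)"
    proof -
      have nz: "(1 + of_nat k :: complex) \<noteq> 0" by (metis of_nat_Suc of_nat_neq_0 add.commute)
      show ?thesis using k Suc nz by (simp add: field_simps)
    qed
  qed simp
  also have "\<dots> = - (\<Sum>j=1..n. (-1)^j * of_nat (n choose j) * of_nat j ^ r :: complex)"
    by (simp add: sum_negf)
  also have "(\<Sum>j=1..n. (-1)^j * of_nat (n choose j) * of_nat j ^ r :: complex)
      = (\<Sum>j\<le>n. (-1)^j * of_nat (n choose j) * of_nat j ^ r) - 0^r"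
    by (simp add: atMost_atLeast0 sum.atLeast_Suc_atMost)
  also have "\<dots> = - (0^r)" using alt_sum[OF rn] by simp
  finally show ?thesis using Suc by simp
qed

lemma deriv0:
  fixes P :: "complex poly"
  assumes "degree P \<le> n" "n \<ge> 1"
  shows "poly (pderiv P) 0 = (\<Sum>j=1..n. (-1)^(j-1) * of_nat (n choose j) / of_nat j * (poly P (of_nat j) - poly P 0))"
proof -
  let ?w = "\<lambda>j. (-1)^(j-1) * of_nat (n choose j) / of_nat j :: complex"
  have "(\<Sum>j=1..n. ?w j * (poly P (of_nat j) - poly P 0))
      = (\<Sum>j=1..n. ?w j * (\<Sum>i\<le>n. coeff P i * (of_nat j ^ i - 0^i)))"
    using poly_sum_le[OF assms(1)] by (simp add: sum_subtractf right_diff_distrib)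
  also have "\<dots> = (\<Sum>j=1..n. \<Sum>i\<le>n. coeff P i * (?w j * (of_nat j ^ i - 0^i)))"
    by (simp add: sum_distrib_left mult_ac)
  also have "\<dots> = (\<Sum>i\<le>n. \<Sum>j=1..n. coeff P i * (?w j * (of_nat j ^ i - 0^i)))"
    by (rule sum.swap)
  also have "\<dots> = (\<Sum>i\<le>n. coeff P i * (if i = 1 then 1 else 0))"
  proof (rule sum.cong)
    fix i assume i: "i \<in> {..n}"
    have "(\<Sum>j=1..n. coeff P i * (?w j * (of_nat j ^ i - 0^i))) = coeff P i * (\<Sum>j=1..n. ?w j * (of_nat j ^ i - 0^i))"
      by (rule sum_distrib_left[symmetric])
    also have "\<dots> = coeff P i * (if i = 1 then 1 else 0)"
      using K_sum[of i n] i by simp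
    finally show "(\<Sum>j=1..n. coeff P i * (?w j * (of_nat j ^ i - 0^i))) = coeff P i * (if i = 1 then 1 else 0)" .
  qed simp
  also have "\<dots> = (\<Sum>i\<le>n. if i = 1 then coeff P i else 0)" by (rule sum.cong) auto
  also have "\<dots> = coeff P 1" using assms(2) by (simp only: sum.delta finite_atMost atMost_iff if_True)
  also have "\<dots> = poly (pderiv P) 0" by (simp add: poly_0_coeff_0 coeff_pderiv)
  finally show ?thesis by simp
qed


lemma upper:
  assumes P: "P \<in> E n" and n: "n \<ge> 1"
  shows "smult (of_nat (Lcm {1..n})) (pderiv P) \<in> E n"
proof -
  let ?L = "Lcm {1..n} :: nat"
  have dP: "degree P \<le> n" and iv: "\<And>k::int. poly P (of_int k) \<in> \<int>" using P by (auto simp: E_def)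
  have "degree (smult (of_nat ?L) (pderiv P)) \<le> n"
    using dP degree_pderiv[of P] degree_smult_le[of "of_nat ?L" "pderiv P"] by linarith
  moreover have "poly (smult (of_nat ?L) (pderiv P)) (of_int m) \<in> \<int>" for m :: int
  proof -
    define Q where "Q = pcompose P [:of_int m, 1:]"
    have dQ: "degree Q \<le> n" using dP by (simp add: Q_def degree_pcompose)
    have d1: "pderiv [:of_int m, 1:] = (1 :: complex poly)" by (simp add: pderiv_pCons)
    have pQ: "poly (pderiv Q) 0 = poly (pderiv P) (of_int m)"
      by (simp add: Q_def pderiv_pcompose d1 poly_pcompose)
    have vQ: "poly Q (of_nat j) \<in> \<int>" for j :: nat
    proof -
      have "poly Q (of_nat j) = poly P (of_int (m + int j))" by (simp add: Q_def poly_pcompose)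
      then show ?thesis using iv[of "m + int j"] by (simp only:)
    qed
    have "of_nat ?L * poly (pderiv P) (of_int m)
        = (\<Sum>j=1..n. of_nat ?L * ((-1)^(j-1) * of_nat (n choose j) / of_nat j * (poly Q (of_nat j) - poly Q 0)))"
      using deriv0[OF dQ n] pQ by (simp add: sum_distrib_left)
    also have "\<dots> \<in> \<int>"
    proof (rule Ints_sum)
      fix j assume j: "j \<in> {1..n}"
      then have "j dvd ?L" by (intro dvd_Lcm) auto
      then obtain t where t: "?L = j * t" by (auto elim: dvdE)
      have jnz: "(of_nat j :: complex) \<noteq> 0" using j by simp
      have "of_nat ?L * ((-1)^(j-1) * of_nat (n choose j) / of_nat j * (poly Q (of_nat j) - poly Q 0))
          = (-1)^(j-1) * of_nat (n choose j) * of_nat t * (poly Q (of_nat j) - poly Q 0)"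
      proof -
        have tL: "(of_nat ?L :: complex) = of_nat j * of_nat t" by (simp only: t of_nat_mult)
        show ?thesis unfolding tL using jnz by (simp add: field_simps)
      qed
      also have "\<dots> \<in> \<int>" using vQ[of j] vQ[of 0]
        by (intro Ints_mult Ints_diff Ints_power Ints_minus Ints_1 Ints_of_nat) simp_all
      finally show "of_nat ?L * ((-1)^(j-1) * of_nat (n choose j) / of_nat j * (poly Q (of_nat j) - poly Q 0)) \<in> \<int>" .
    qed
    finally show ?thesis by simp
  qed
  ultimately show ?thesis by (simp add: E_def)
qed


definition B :: "nat \<Rightarrow> complex poly" where
  "B k = smult (1 / fact k) (\<Prod>i<k. [:- of_nat i, 1:])"
lemma B_deriv: "poly (pderiv (B (Suc k))) 0 = (-1)^k / of_nat (Suc k)"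
proof -
  define R where "R = (\<Prod>i<k. [:- of_nat (Suc i), 1:] :: complex poly)"
  have "(\<Prod>i<Suc k. [:- of_nat i, 1:] :: complex poly) = [:- of_nat 0, 1:] * R"
    unfolding R_def by (rule prod.lessThan_Suc_shift)
  then have e: "(\<Prod>i<Suc k. [:- of_nat i, 1:] :: complex poly) = [:0, 1:] * R" by simp
  have "pderiv ([:0, 1:] * R) = R + [:0,1:] * pderiv R" by (simp add: pderiv_mult pderiv_pCons)
  then have "poly (pderiv (B (Suc k))) 0 = poly R 0 / fact (Suc k)"
    unfolding B_def pderiv_smult e by simp
  also have "poly R 0 = (\<Prod>i<k. - of_nat (Suc i) :: complex)"
    by (simp add: R_def poly_prod)
  also have "\<dots> = (\<Prod>i<k. (-1) * of_nat (Suc i))" by simp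
  also have "\<dots> = (-1)^k * (\<Prod>i<k. of_nat (Suc i))"
    by (simp only: prod.distrib prod_constant card_lessThan)
  also have "(\<Prod>i<k. of_nat (Suc i) :: complex) = fact k"
    by (simp add: fact_prod_Suc lessThan_atLeast0)
  finally have h: "poly (pderiv (B (Suc k))) 0 = (-1)^k * fact k / fact (Suc k)" .
  have "(-1)^k * fact k / fact (Suc k) = ((-1)^k / of_nat (Suc k) :: complex)"
    by (simp del: of_nat_Suc add: fact_Suc)
  with h show ?thesis by simp
qed

lemma B_in_E: "k \<le> n \<Longrightarrow> B k \<in> E n"
proof -
  assume kn: "k \<le> n"
  let ?f = "\<lambda>i. [:- of_nat i, 1:] :: complex poly"
  have dl: "\<And>i. degree (?f i) = 1" by simp
  have "degree (prod ?f {..<k}) \<le> sum (degree \<circ> ?f) {..<k}" by (rule degree_prod_sum_le) simp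
  also have "sum (degree \<circ> ?f) {..<k} = k" by (simp only: comp_def dl) simp
  finally have dk: "degree (prod ?f {..<k}) \<le> k" .
  have "degree (B k) \<le> n" using degree_smult_le[of "1/fact k" "prod ?f {..<k}"] kn dk unfolding B_def by linarith
  moreover have "poly (B k) (of_int m) \<in> \<int>" for m :: int
  proof -
    have "\<exists>z::int. fact k * z = (\<Prod>i = 0..<k. m - int i)"
      by (rule exI, rule gbinomial_int_mult_fact)
    then obtain z :: int where z: "fact k * z = (\<Prod>i = 0..<k. m - int i)" by blast
    have "of_int (fact k * z) = (of_int (\<Prod>i = 0..<k. m - int i) :: complex)"
      by (simp only: z)
    then have e: "fact k * of_int z = (\<Prod>i<k. of_int m - of_nat i :: complex)"
      by (simp add: lessThan_atLeast0)
    have "poly (B k) (of_int m) = (\<Prod>i<k. of_int m - of_nat i) / fact k"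
      by (simp add: B_def poly_prod)
    also have "\<dots> = of_int z" unfolding e[symmetric] by simp
    finally show ?thesis by simp
  qed
  ultimately show ?thesis by (simp add: E_def)
qed

lemma lower:
  assumes c: "\<forall>P\<in>E n. smult (of_nat c) (pderiv P) \<in> E n" and k: "1 \<le> k" "k \<le> n"
  shows "k dvd c"
proof -
  obtain k' where k': "k = Suc k'" using k by (cases k) auto
  have "smult (of_nat c) (pderiv (B k)) \<in> E n" using c B_in_E[OF k(2)] by blast
  then have "\<forall>m::int. poly (smult (of_nat c) (pderiv (B k))) (of_int m) \<in> \<int>" unfolding E_def by blast
  then have "poly (smult (of_nat c) (pderiv (B k))) (of_int 0) \<in> \<int>" by blast
  then have i1: "of_nat c * ((-1)^k' / of_nat k) \<in> (\<int> :: complex set)"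
    using B_deriv[of k'] k' by simp
  have m1: "((-1)^k' :: complex) \<in> \<int>" by (intro Ints_power Ints_minus Ints_1)
  have "(-1)^k' * (of_nat c * ((-1)^k' / of_nat k)) \<in> (\<int> :: complex set)"
    using Ints_mult[OF m1 i1] .
  moreover have "(-1)^k' * (of_nat c * ((-1)^k' / of_nat k)) = (of_nat c / of_nat k :: complex)"
  proof -
    have "((-1)^k' * (-1)^k' :: complex) = 1" by (simp add: power_mult_distrib[symmetric])
    then show ?thesis by (simp add: field_simps)
  qed
  ultimately have "(of_nat c / of_nat k :: complex) \<in> \<int>" by (simp only:)
  then obtain z where z: "of_nat c / of_nat k = (of_int z :: complex)" by (elim Ints_cases) simp
  have "(of_nat k :: complex) \<noteq> 0" using k by simp
  then have "(of_int (int c) :: complex) = of_int (int k * z)" using z by (simp add: field_simps)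
  then have "int c = int k * z" by (simp only: of_int_eq_iff)
  then have "int k dvd int c" by simp
  then show ?thesis by simp
qed

theorem theorem1:
  fixes n :: nat
  assumes "n \<ge> 1"
  shows "(LEAST c::nat. c > 0 \<and> (\<forall>P\<in>E n. smult (of_nat c) (pderiv P) \<in> E n))
           = Lcm {1..n}"
proof (rule Least_equality)
  have "Lcm {1..n} \<noteq> (0::nat)" by (simp add: Lcm_0_iff)
  then have l0: "Lcm {1..n} > (0::nat)" by (simp only: neq0_conv)
  show "Lcm {1..n} > 0 \<and> (\<forall>P\<in>E n. smult (of_nat (Lcm {1..n})) (pderiv P) \<in> E n)"
    using upper[OF _ assms] l0 by blast
next
  fix c :: nat
  assume h: "c > 0 \<and> (\<forall>P\<in>E n. smult (of_nat c) (pderiv P) \<in> E n)"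
  then have "Lcm {1..n} dvd c" by (intro Lcm_least) (auto intro: lower)
  then show "Lcm {1..n} \<le> c" using h by (simp add: dvd_imp_le)
qed

end
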